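(* Let $\mathcal K=\{\mathbf x\in\mathbb R^n : \mathbf k_i^T\mathbf x\ge 0,\ i=1,\dots,p\}$ be a polyhedral cone with non-empty topological interior, where each $\mathbf k_i$ has unit Euclidean length, and let $\mathbf x_\infty$ and $z_\infty$ denote the center of its insphere and its inradius, respectively. Define linear programs as follows. Problem $P_0$: maximize $z$ over $(\mathbf x,z)\in\mathbb R^n\times\mathbb R$ subject to $\mathbf k_i^T\mathbf x\ge z$ for all $i$ and $-1\le x_i\le 1$ for all $i=1,\dots,n$. Given Problem $P_\ell$, let $(\mathbf x_\ell,z_\ell)$ be an (arbitrarily chosen) optimal solution of $P_\ell$, let $\mathbf u_\ell=\mathbf x_\ell/\|\mathbf x_\ell\|$, and let Problem $P_{\ell+1}$ be Problem $P_\ell$ with the additional constraint $\mathbf u_\ell^T\mathbf x\le 1$. Then $\mathbf x_\ell\to\mathbf x_\infty$ and $z_\ell\to z_\infty$ as $\ell\to\infty$.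
   Context: $B_r(\mathbf x)=\{\mathbf y\in\mathbb R^n:\|\mathbf x-\mathbf y\|\le r\}$ denotes the closed ball, with $\|\cdot\|$ the Euclidean norm. The insphere of a polyhedral cone $\mathcal K$ is the largest ball contained in $\mathcal K$ whose center lies in $B_1(\mathbf 0)$ (it is unique when $\mathcal K$ has non-empty interior), and the inradius is its radius. (For each $\ell$, problem $P_\ell$ has an optimal solution and $\|\mathbf x_\ell\|\ge 1$, so $\mathbf u_\ell$ is well defined.) *)

theory Defs
  imports "HOL-Analysis.Analysis"
begin

definition poly_cone :: "nat \<Rightarrow> (nat \<Rightarrow> real ^ 'n) \<Rightarrow> (real ^ 'n) set" where
  "poly_cone p k = {x. \<forall>i<p. k i \<bullet> x \<ge> 0}"

definition is_insphere :: "(real ^ 'n) set \<Rightarrow> real ^ 'n \<Rightarrow> real \<Rightarrow> bool" where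
  "is_insphere K c r \<longleftrightarrow> norm c \<le> 1 \<and> cball c r \<subseteq> K \<and>
     (\<forall>c' r'. norm c' \<le> 1 \<and> cball c' r' \<subseteq> K \<longrightarrow> r' \<le> r)"

text \<open>Feasible set of problem P_l, given the earlier optimal points xs 0, ..., xs (l-1):
  k_i . x >= z for all i, -1 <= x_j <= 1 for all coordinates j, and u_m . x <= 1 for m < l,
  where u_m = xs m / norm (xs m).\<close>
definition lp_feasible :: "nat \<Rightarrow> (nat \<Rightarrow> real ^ 'n) \<Rightarrow> (nat \<Rightarrow> real ^ 'n) \<Rightarrow> nat
    \<Rightarrow> real ^ 'n \<Rightarrow> real \<Rightarrow> bool" where
  "lp_feasible p k xs l x z \<longleftrightarrow>
     (\<forall>i<p. k i \<bullet> x \<ge> z) \<and> (\<forall>j. -1 \<le> x $ j \<and> x $ j \<le> 1) \<and>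
     (\<forall>m<l. (xs m /\<^sub>R norm (xs m)) \<bullet> x \<le> 1)"

definition lp_optimal :: "nat \<Rightarrow> (nat \<Rightarrow> real ^ 'n) \<Rightarrow> (nat \<Rightarrow> real ^ 'n) \<Rightarrow> nat
    \<Rightarrow> real ^ 'n \<Rightarrow> real \<Rightarrow> bool" where
  "lp_optimal p k xs l x z \<longleftrightarrow> lp_feasible p k xs l x z \<and>
     (\<forall>x' z'. lp_feasible p k xs l x' z' \<longrightarrow> z' \<le> z)"

end

theory Submission
  imports Defs
begin

lemma ball_sub:
  fixes k :: "nat \<Rightarrow> real ^ 'n"
  assumes unit: "\<And>i. i < p \<Longrightarrow> norm (k i) = 1" and r: "r \<ge> 0"
  shows "cball c r \<subseteq> poly_cone p k \<longleftrightarrow> (\<forall>i<p. r \<le> k i \<bullet> c)"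
proof
  assume H: "cball c r \<subseteq> poly_cone p k"
  show "\<forall>i<p. r \<le> k i \<bullet> c"
  proof (intro allI impI)
    fix i assume i: "i < p"
    have "c - r *\<^sub>R k i \<in> cball c r" using unit[OF i] r by (simp add: dist_norm)
    hence "c - r *\<^sub>R k i \<in> poly_cone p k" using H by blast
    hence "0 \<le> k i \<bullet> (c - r *\<^sub>R k i)" using i unfolding poly_cone_def by blast
    moreover have "k i \<bullet> k i = 1" using unit[OF i] by (metis power2_norm_eq_inner power_one)
    ultimately show "r \<le> k i \<bullet> c" by (simp add: inner_diff_right)
  qed
next
  assume H: "\<forall>i<p. r \<le> k i \<bullet> c"
  show "cball c r \<subseteq> poly_cone p k"
  proof
    fix y assume y: "y \<in> cball c r"
    have "0 \<le> k i \<bullet> y" if i: "i < p" for i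
    proof -
      have "k i \<bullet> (c - y) \<le> norm (k i) * norm (c - y)" by (rule norm_cauchy_schwarz)
      also have "\<dots> \<le> r" using unit[OF i] y by (simp add: dist_norm)
      moreover have "r \<le> k i \<bullet> c" using H i by blast
      ultimately show ?thesis by (simp add: inner_diff_right)
    qed
    thus "y \<in> poly_cone p k" unfolding poly_cone_def by auto
  qed
qed

lemma norm_sgn_le: "norm (x /\<^sub>R norm x) \<le> (1::real)"
  by (cases "x = 0") auto

theorem theorem1:
  fixes p :: nat and k :: "nat \<Rightarrow> real ^ 'n"
    and xinf :: "real ^ 'n" and zinf :: real
    and xs :: "nat \<Rightarrow> real ^ 'n" and zs :: "nat \<Rightarrow> real"
  assumes unit: "\<And>i. i < p \<Longrightarrow> norm (k i) = 1"
    and int: "interior (poly_cone p k) \<noteq> {}"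
    and ins: "is_insphere (poly_cone p k) xinf zinf"
    and opt: "\<And>l. lp_optimal p k xs l (xs l) (zs l)"
  shows "xs \<longlonglongrightarrow> xinf \<and> zs \<longlonglongrightarrow> zinf"
proof -
  have F1: "\<And>l i. i < p \<Longrightarrow> zs l \<le> k i \<bullet> xs l"
    and F2: "\<And>l j. -1 \<le> xs l $ j \<and> xs l $ j \<le> 1"
    and F3: "\<And>l m. m < l \<Longrightarrow> (xs m /\<^sub>R norm (xs m)) \<bullet> xs l \<le> 1"
    using opt unfolding lp_optimal_def lp_feasible_def by auto
  have Fmax: "\<And>l x z. lp_feasible p k xs l x z \<Longrightarrow> z \<le> zs l"
    using opt unfolding lp_optimal_def by auto
  have ppos: "p > 0"
  proof (rule ccontr)
    assume "\<not> p > 0"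
    hence "lp_feasible p k xs 0 (xs 0) (zs 0 + 1)" using F2 unfolding lp_feasible_def by auto
    from Fmax[OF this] show False by simp
  qed
  have insb: "r \<le> zinf" if a: "norm c \<le> 1" "r \<ge> 0" "\<forall>i<p. r \<le> k i \<bullet> c" for c r
  proof -
    have "cball c r \<subseteq> poly_cone p k" using ball_sub[OF unit a(2)] a(3) by simp
    thus ?thesis using ins a(1) unfolding is_insphere_def by blast
  qed
  have zpos: "zinf > 0"
  proof -
    obtain c where "c \<in> interior (poly_cone p k)" using int by auto
    then obtain e where e: "e > 0" "cball c e \<subseteq> poly_cone p k"
      using mem_interior_cball by blast
    hence H: "\<forall>i<p. e \<le> k i \<bullet> c" using ball_sub[OF unit] by auto
    define s where "s = max 1 (norm c)"
    have s: "s \<ge> 1" "norm c \<le> s" unfolding s_def by auto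
    have n1: "norm (c /\<^sub>R s) \<le> 1" using s by (simp add: field_simps)
    have n2: "\<forall>i<p. e / s \<le> k i \<bullet> (c /\<^sub>R s)"
    proof (intro allI impI)
      fix i assume "i < p"
      hence "e / s \<le> (k i \<bullet> c) / s" using H s by (intro divide_right_mono) auto
      thus "e / s \<le> k i \<bullet> (c /\<^sub>R s)" by (simp add: divide_inverse mult.commute)
    qed
    have "e / s \<le> zinf" using e s by (intro insb[OF n1 _ n2]) auto
    moreover have "e / s > 0" using e s by auto
    ultimately show ?thesis by linarith
  qed
  have xinfn: "norm xinf \<le> 1" using ins unfolding is_insphere_def by auto
  have xinfk: "\<forall>i<p. zinf \<le> k i \<bullet> xinf"
    using ins ball_sub[OF unit, where r=zinf and c=xinf] zpos unfolding is_insphere_def by auto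
  have inner_le: "\<And>m l. m < l \<Longrightarrow> xs m \<bullet> xs l \<le> norm (xs m)"
  proof -
    fix m l :: nat assume ml: "m < l"
    show "xs m \<bullet> xs l \<le> norm (xs m)"
    proof (cases "xs m = 0")
      case False
      hence np: "norm (xs m) > 0" by simp
      have "(1 / norm (xs m)) * (xs m \<bullet> xs l) \<le> 1" using F3[OF ml] by (simp add: divide_inverse)
      thus ?thesis using np by (simp add: field_simps)
    qed simp
  qed
  have zge: "\<And>l. zinf \<le> zs l"
  proof -
    fix l
    have "lp_feasible p k xs l xinf zinf"
      unfolding lp_feasible_def
    proof (intro conjI allI impI)
      fix j show "-1 \<le> xinf $ j" "xinf $ j \<le> 1"
        using component_le_norm_cart[of xinf j] xinfn by auto
    next
      fix m assume "m < l"
      have "(xs m /\<^sub>R norm (xs m)) \<bullet> xinf \<le> norm (xs m /\<^sub>R norm (xs m)) * norm xinf"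
        by (rule norm_cauchy_schwarz)
      also have "\<dots> \<le> 1 * 1" using norm_sgn_le xinfn by (intro mult_mono) auto
      finally show "(xs m /\<^sub>R norm (xs m)) \<bullet> xinf \<le> 1" by simp
    qed (use xinfk in auto)
    thus "zinf \<le> zs l" by (rule Fmax)
  qed
  have dec: "decseq zs"
  proof (rule decseq_SucI)
    fix l
    have "lp_feasible p k xs l (xs (Suc l)) (zs (Suc l))"
      unfolding lp_feasible_def using F1 F2 F3 by auto
    thus "zs (Suc l) \<le> zs l" by (rule Fmax)
  qed
  obtain L where L: "zs \<longlonglongrightarrow> L" "\<forall>i. L \<le> zs i"
    using decseq_convergent[OF dec, of zinf] zge by blast
  have Lge: "zinf \<le> L" using L(1) zge by (intro LIMSEQ_le_const) auto
  have cube: "\<And>l. xs l \<in> cbox (-1) 1" using F2 by (simp add: mem_box_cart)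
  have key: "y = xinf \<and> L = zinf" if g: "strict_mono g" and y: "(xs \<circ> g) \<longlonglongrightarrow> y" for g y
  proof -
    have zg: "(zs \<circ> g) \<longlonglongrightarrow> L" using LIMSEQ_subseq_LIMSEQ[OF L(1) g] .
    have yk: "\<forall>i<p. L \<le> k i \<bullet> y"
    proof (intro allI impI)
      fix i assume i: "i < p"
      have "(\<lambda>j. k i \<bullet> (xs \<circ> g) j) \<longlonglongrightarrow> k i \<bullet> y"
        by (intro tendsto_inner tendsto_const y)
      thus "L \<le> k i \<bullet> y" using zg F1[OF i] by (intro LIMSEQ_le[OF zg]) auto
    qed
    have "(\<lambda>j. (xs \<circ> g) j \<bullet> (xs \<circ> g) (Suc j)) \<longlonglongrightarrow> y \<bullet> y"
      using y LIMSEQ_Suc[OF y] by (intro tendsto_inner) (auto simp: o_def)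
    moreover have "(\<lambda>j. norm ((xs \<circ> g) j)) \<longlonglongrightarrow> norm y" by (intro tendsto_norm y)
    moreover have "\<forall>j. (xs \<circ> g) j \<bullet> (xs \<circ> g) (Suc j) \<le> norm ((xs \<circ> g) j)"
      using inner_le g by (auto simp: strict_mono_def)
    ultimately have "y \<bullet> y \<le> norm y" by (intro LIMSEQ_le) auto
    hence "norm y * norm y \<le> norm y" by (metis power2_eq_square power2_norm_eq_inner)
    hence yn: "norm y \<le> 1"
    proof -
      assume a: "norm y * norm y \<le> norm y"
      show "norm y \<le> 1"
      proof (rule ccontr)
        assume "\<not> norm y \<le> 1"
        hence "norm y * 1 < norm y * norm y" by (intro mult_strict_left_mono) auto
        thus False using a by simp
      qed
    qed
    have Lz: "L = zinf" using insb[OF yn _ yk] Lge zpos by auto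
    show ?thesis
    proof (rule ccontr)
      assume "\<not> ?thesis"
      hence ne: "y \<noteq> xinf" using Lz by auto
      define m where "m = (1/2) *\<^sub>R (y + xinf)"
      have "norm (y + xinf)^2 + norm (y - xinf)^2 = 2 * norm y ^2 + 2 * norm xinf ^2"
        by (simp add: power2_norm_eq_inner algebra_simps inner_commute)
      moreover have "norm (y - xinf)^2 > 0" using ne by simp
      moreover have "norm y ^2 \<le> 1" "norm xinf ^2 \<le> 1" using yn xinfn
        by (auto simp: power_le_one)
      ultimately have "norm (y + xinf)^2 < 4" by linarith
      hence "norm (y + xinf)^2 < 2^2" by simp
      hence "norm (y + xinf) < 2" using power_less_imp_less_base by fastforce
      hence mn: "norm m < 1" unfolding m_def by simp
      have mk: "\<forall>i<p. zinf \<le> k i \<bullet> m"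
      proof (intro allI impI)
        fix i assume i: "i < p"
        have "zinf \<le> k i \<bullet> y" "zinf \<le> k i \<bullet> xinf" using yk xinfk Lz i by auto
        thus "zinf \<le> k i \<bullet> m" unfolding m_def by (simp add: inner_add_right)
      qed
      hence "zinf \<le> k 0 \<bullet> m" using ppos by auto
      hence "m \<noteq> 0" using zpos by auto
      hence mp: "norm m > 0" by simp
      have q1: "norm (m /\<^sub>R norm m) \<le> 1" by (rule norm_sgn_le)
      have q2: "\<forall>i<p. zinf / norm m \<le> k i \<bullet> (m /\<^sub>R norm m)"
      proof (intro allI impI)
        fix i assume "i < p"
        hence "zinf / norm m \<le> (k i \<bullet> m) / norm m" using mk mp by (intro divide_right_mono) auto
        thus "zinf / norm m \<le> k i \<bullet> (m /\<^sub>R norm m)" by (simp add: divide_inverse mult.commute)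
      qed
      have "zinf / norm m \<le> zinf" using zpos mp by (intro insb[OF q1 _ q2]) auto
      moreover have "zinf / norm m > zinf"
      proof -
        have "zinf * norm m < zinf * 1" using mp mn zpos by (intro mult_strict_left_mono) auto
        thus ?thesis using mp by (simp add: less_divide_eq)
      qed
      ultimately show False by linarith
    qed
  qed
  have sc: "seq_compact (cbox (-1::real^'n) 1)" by (intro compact_imp_seq_compact compact_cbox)
  obtain y0 g0 where "strict_mono g0" "(xs \<circ> g0) \<longlonglongrightarrow> y0"
    using seq_compactE[OF sc, of xs] cube by blast
  hence Lz: "L = zinf" using key by blast
  have "xs \<longlonglongrightarrow> xinf"
  proof (rule ccontr)
    assume nc: "\<not> xs \<longlonglongrightarrow> xinf"
    then obtain e where e: "e > 0" "\<not> eventually (\<lambda>l. dist (xs l) xinf < e) sequentially"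
      by (auto simp: tendsto_iff)
    have "frequently (\<lambda>l. \<not> dist (xs l) xinf < e) sequentially"
      using e(2) by (simp add: not_eventually)
    hence "frequently (\<lambda>l. \<not> dist (xs l) xinf < e) cofinite"
      by (simp add: cofinite_eq_sequentially)
    hence inf: "infinite {l. \<not> dist (xs l) xinf < e}"
      by (simp add: frequently_cofinite)
    obtain g :: "nat \<Rightarrow> nat" where g: "strict_mono g" "\<forall>n. g n \<in> {l. \<not> dist (xs l) xinf < e}"
      using infinite_enumerate[OF inf] by auto
    have cg: "\<forall>n. (xs \<circ> g) n \<in> cbox (-1) 1" using cube by simp
    obtain y h where h: "y \<in> cbox (-1) 1" "strict_mono h" "((xs \<circ> g) \<circ> h) \<longlonglongrightarrow> y"
      by (rule seq_compactE[OF sc cg])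
    have gh: "strict_mono (g \<circ> h)" using g(1) h(2) by (rule strict_mono_o)
    have cv: "(xs \<circ> (g \<circ> h)) \<longlonglongrightarrow> y" using h(3) by (simp add: o_assoc)
    have "y = xinf" using key[OF gh cv] by simp
    hence "((xs \<circ> g) \<circ> h) \<longlonglongrightarrow> xinf" using h(3) by simp
    from tendstoD[OF this e(1)]
    obtain N where "\<forall>j\<ge>N. dist (((xs \<circ> g) \<circ> h) j) xinf < e"
      unfolding eventually_sequentially by blast
    hence "dist (((xs \<circ> g) \<circ> h) N) xinf < e" by simp
    moreover have "\<not> dist (xs (g (h N))) xinf < e" using g(2) by simp
    ultimately show False by simp
  qed
  thus ?thesis using L(1) Lz by simp
qed

end
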